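(* Let $a$ be a point of $AG(4,3)$ and let $L_1,L_2,L_3,L_4$ be four distinct $a$-lines whose $8$ points are not co-hyperplanar. Then there are exactly eight demicaps with anchor point $a$ that contain $L_1\cup L_2\cup L_3\cup L_4$.
   Context: $AG(4,3)$ is the affine space $\mathbb{F}_3^4$; a line is a set of three distinct points $\{x,y,z\}$ with $x+y+z=0$. A cap is a set of points containing no line. A hyperplane is a $3$-dimensional affine subspace of $\mathbb{F}_3^4$; a set of points is co-hyperplanar if it lies in a common hyperplane. For a point $a$, an $a$-line is a pair of points $\{b,c\}$ such that $\{a,b,c\}$ is a line. A demicap with anchor point $a$ is a cap consisting of the $10$ points of five $a$-lines such that no four of these five $a$-lines are co-hyperplanar. *)

theory Defs
  imports "HOL-Analysis.Finite_Cartesian_Product" "HOL-Library.Numeral_Type"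
begin

text \<open>Points of AG(4,3) = F_3^4, with F_3 the numeral type 3 (integers mod 3).\<close>
type_synonym point = "3 ^ 4"

definition smul :: "3 \<Rightarrow> point \<Rightarrow> point" where
  "smul s u = (\<chi> i. s * u $ i)"

definition is_line :: "point set \<Rightarrow> bool" where
  "is_line L \<longleftrightarrow> (\<exists>x y z. L = {x, y, z} \<and> x \<noteq> y \<and> y \<noteq> z \<and> x \<noteq> z \<and> x + y + z = 0)"

definition is_cap :: "point set \<Rightarrow> bool" where
  "is_cap C \<longleftrightarrow> (\<forall>L. is_line L \<longrightarrow> \<not> L \<subseteq> C)"

definition hyperplane :: "point set \<Rightarrow> bool" where
  "hyperplane H \<longleftrightarrow> (\<exists>p u v w.
      (\<forall>s t r. smul s u + smul t v + smul r w = 0 \<longrightarrow> s = 0 \<and> t = 0 \<and> r = 0) \<and>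
      H = {p + smul s u + smul t v + smul r w | s t r. True})"

definition cohyperplanar :: "point set \<Rightarrow> bool" where
  "cohyperplanar S \<longleftrightarrow> (\<exists>H. hyperplane H \<and> S \<subseteq> H)"

definition a_line :: "point \<Rightarrow> point set \<Rightarrow> bool" where
  "a_line a P \<longleftrightarrow> (\<exists>b c. P = {b, c} \<and> is_line {a, b, c} \<and> a \<noteq> b \<and> a \<noteq> c \<and> b \<noteq> c)"

definition demicap :: "point \<Rightarrow> point set \<Rightarrow> bool" where
  "demicap a D \<longleftrightarrow> is_cap D \<and>
     (\<exists>M. card M = 5 \<and> (\<forall>P\<in>M. a_line a P) \<and> D = \<Union>M \<and> card D = 10 \<and>
          (\<forall>M'\<subseteq>M. card M' = 4 \<longrightarrow> \<not> cohyperplanar (\<Union>M')))"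

end

theory Submission
  imports Defs "HOL-Library.FuncSet"
begin


lemma ex3: fixes x :: 3 shows "x = 0 \<or> x = 1 \<or> x = 2"
proof (induct x)
  case (of_int z)
  then have "z = 0 \<or> z = 1 \<or> z = 2" by fastforce
  then show ?case by auto
qed

lemma ex4: fixes x :: 4 shows "x = 0 \<or> x = 1 \<or> x = 2 \<or> x = 3"
proof (induct x)
  case (of_int z)
  then have "z = 0 \<or> z = 1 \<or> z = 2 \<or> z = 3" by fastforce
  then show ?case by auto
qed

lemma all4: "(\<forall>i::4. P i) \<longleftrightarrow> P 0 \<and> P 1 \<and> P 2 \<and> P 3"
  using ex4 by metis

lemma three3[simp]: "(3::3) = 0" by simp

lemma three_zero: fixes x :: 3 shows "x + x + x = 0"
  using ex3[of x] by auto

lemma sq3: fixes x :: 3 shows "x \<noteq> 0 \<Longrightarrow> x * x = 1"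
  using ex3[of x] by auto

lemma dbl3: fixes x :: 3 shows "x + x = 0 \<Longrightarrow> x = 0"
  using ex3[of x] by auto

definition vec4 :: "3 \<Rightarrow> 3 \<Rightarrow> 3 \<Rightarrow> 3 \<Rightarrow> point" where
  "vec4 a b c d = (\<chi> i. if i = 0 then a else if i = 1 then b else if i = 2 then c else d)"

lemma vec4_comp[simp]: "vec4 a b c d $ 0 = a" "vec4 a b c d $ 1 = b" "vec4 a b c d $ 2 = c" "vec4 a b c d $ 3 = d"
  by (simp_all add: vec4_def)

lemma point_eq: fixes x y :: point shows "x = y \<longleftrightarrow> x$0 = y$0 \<and> x$1 = y$1 \<and> x$2 = y$2 \<and> x$3 = y$3"
  by (simp add: vec_eq_iff all4)

lemma vec4_eq[simp]: "vec4 a b c d = vec4 a' b' c' d' \<longleftrightarrow> a = a' \<and> b = b' \<and> c = c' \<and> d = d'"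
  by (simp add: point_eq)

lemma point_vec4: "x = vec4 (x$0) (x$1) (x$2) (x$3)"
  by (simp add: point_eq)

lemma vec4_zero: "(0::point) = vec4 0 0 0 0"
  by (simp add: point_eq)

lemma vec4_add[simp]: "vec4 a b c d + vec4 a' b' c' d' = vec4 (a+a') (b+b') (c+c') (d+d')"
  by (simp add: point_eq)

lemma vec4_neg[simp]: "- vec4 a b c d = vec4 (-a) (-b) (-c) (-d)"
  by (simp add: point_eq)

lemma vec4_diff[simp]: "vec4 a b c d - vec4 a' b' c' d' = vec4 (a-a') (b-b') (c-c') (d-d')"
  by (simp add: point_eq)

lemma smul_comp[simp]: "smul s u $ i = s * u $ i"
  by (simp add: smul_def)

lemma smul_vec4[simp]: "smul s (vec4 a b c d) = vec4 (s*a) (s*b) (s*c) (s*d)"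
  by (simp add: point_eq)

lemma smul_add_left: "smul (s + t) u = smul s u + smul t u"
  by (simp add: vec_eq_iff algebra_simps)
lemma smul_add_right: "smul s (u + v) = smul s u + smul s v"
  by (simp add: vec_eq_iff algebra_simps)
lemma smul_diff_left: "smul (s - t) u = smul s u - smul t u"
  by (simp add: vec_eq_iff algebra_simps)
lemma smul_0[simp]: "smul 0 u = 0"
  by (simp add: vec_eq_iff)
lemma smul_1[simp]: "smul 1 u = u"
  by (simp add: vec_eq_iff)
lemma smul_zero[simp]: "smul s 0 = 0"
  by (simp add: vec_eq_iff)
lemma smul_smul: "smul s (smul t u) = smul (s*t) u"
  by (simp add: vec_eq_iff)
lemma smul_neg_left: "smul (-s) u = - smul s u"
  by (simp add: vec_eq_iff)
lemma smul_neg_right: "smul s (- u) = - smul s u"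
  by (simp add: vec_eq_iff)
lemma smul_2: "smul 2 u = u + u"
  by (simp add: vec_eq_iff algebra_simps)
lemma smul_2' : "smul 2 u = - u"
proof -
  have "\<And>x::3. 2 * x = - x" subgoal for x using ex3[of x] by auto done
  then show ?thesis by (simp add: vec_eq_iff)
qed

lemma pt_three: fixes x :: point shows "x + x + x = 0"
  by (simp add: vec_eq_iff three_zero)
lemma pt_dbl: fixes x :: point shows "x + x = 0 \<Longrightarrow> x = 0"
  by (simp add: vec_eq_iff dbl3)
lemma pt_neg_self: fixes x :: point shows "- x = x \<Longrightarrow> x = 0"
  by (metis pt_dbl add.right_inverse)
lemma pt_2neg: fixes x :: point shows "- (x + x) = x"
  by (metis add.inverse_unique pt_three add.assoc)

lemma card_point: "card (UNIV :: point set) = 81"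
proof -
  have "(UNIV :: point set) = (\<lambda>(a,b,c,d). vec4 a b c d) ` (UNIV \<times> UNIV \<times> UNIV \<times> UNIV)"
  proof (rule set_eqI)
    fix x :: point
    show "x \<in> UNIV \<longleftrightarrow> x \<in> (\<lambda>(a,b,c,d). vec4 a b c d) ` (UNIV \<times> UNIV \<times> UNIV \<times> UNIV)"
      by (simp, rule rev_image_eqI[where x="(x$0,x$1,x$2,x$3)"]) (simp_all add: point_vec4[symmetric])
  qed
  moreover have "inj_on (\<lambda>(a,b,c,d). vec4 a b c d) (UNIV \<times> UNIV \<times> UNIV \<times> (UNIV :: 3 set))"
    by (rule inj_onI) clarsimp
  ultimately show ?thesis by (simp add: card_image card_cartesian_product)
qed



lemma is_line_iff: "is_line S \<longleftrightarrow> card S = 3 \<and> sum id S = 0"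
proof
  assume "is_line S"
  then obtain x y z where "S = {x,y,z}" "x \<noteq> y" "y \<noteq> z" "x \<noteq> z" "x + y + z = 0"
    unfolding is_line_def by blast
  then show "card S = 3 \<and> sum id S = 0" by (simp add: add.assoc)
next
  assume "card S = 3 \<and> sum id S = 0"
  then obtain x y z where "S = {x,y,z}" "x \<noteq> y" "y \<noteq> z" "x \<noteq> z" "sum id S = 0"
    by (auto simp: card_3_iff)
  then show "is_line S" unfolding is_line_def by (intro exI[of _ x] exI[of _ y] exI[of _ z]) (simp add: add.assoc)
qed

definition affine :: "(point \<Rightarrow> point) \<Rightarrow> bool" where
  "affine g \<longleftrightarrow> (\<forall>x y. g (x + y) = g x + g y - g 0)"

lemma aff_add: "affine g \<Longrightarrow> g (x + y) = g x + g y - g 0"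
  by (simp add: affine_def)

lemma aff_diff: "affine g \<Longrightarrow> g (x - y) = g x - g y + g 0"
proof -
  assume a: "affine g"
  have "g x = g ((x - y) + y)" by simp
  also have "\<dots> = g (x - y) + g y - g 0" using aff_add[OF a] by blast
  finally show ?thesis by (simp add: algebra_simps)
qed

lemma aff_smul: "affine g \<Longrightarrow> g (smul s x) = smul s (g x - g 0) + g 0"
proof -
  assume a: "affine g"
  consider "s = 0" | "s = 1" | "s = 2" using ex3 by blast
  then show ?thesis
  proof cases
    case 3
    then show ?thesis using aff_add[OF a, of x x] by (simp add: smul_2 algebra_simps)
  qed simp_all
qed

lemma aff_comb: "affine g \<Longrightarrow>
  g (p + smul s u + smul t v + smul r w) = g p + smul s (g u - g 0) + smul t (g v - g 0) + smul r (g w - g 0)"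
  by (simp add: aff_add aff_smul algebra_simps)

lemma line_img: assumes "inj g" "affine g" "is_line S" shows "is_line (g ` S)"
proof -
  obtain x y z where S: "S = {x,y,z}" "x \<noteq> y" "y \<noteq> z" "x \<noteq> z" "x + y + z = 0"
    using assms(3) unfolding is_line_def by blast
  have "g x + g y + g z = g (x + y + z) + g 0 + g 0"
    using aff_add[OF assms(2), of "x+y" z] aff_add[OF assms(2), of x y] by (simp add: algebra_simps)
  also have "\<dots> = 0" using S(5) pt_three by simp
  finally have "g x + g y + g z = 0" .
  moreover have "g x \<noteq> g y" "g y \<noteq> g z" "g x \<noteq> g z" using S assms(1) by (auto dest: injD)
  ultimately show ?thesis unfolding is_line_def S(1) by auto
qed

lemma hyp_img: assumes "inj g" "affine g" "hyperplane H" shows "hyperplane (g ` H)"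
proof -
  obtain p u v w where ind: "\<forall>s t r. smul s u + smul t v + smul r w = 0 \<longrightarrow> s = 0 \<and> t = 0 \<and> r = 0"
    and H: "H = {p + smul s u + smul t v + smul r w | s t r. True}"
    using assms(3) unfolding hyperplane_def by blast
  define u' where "u' = g u - g 0"
  define v' where "v' = g v - g 0"
  define w' where "w' = g w - g 0"
  have eq: "\<And>s t r. g (p + smul s u + smul t v + smul r w) = g p + smul s u' + smul t v' + smul r w'"
    using aff_comb[OF assms(2)] u'_def v'_def w'_def by simp
  have "g ` H = {g p + smul s u' + smul t v' + smul r w' | s t r. True}"
  proof (rule set_eqI, rule iffI)
    fix y assume "y \<in> g ` H"
    then obtain s t r where "y = g (p + smul s u + smul t v + smul r w)" unfolding H by blast
    then show "y \<in> {g p + smul s u' + smul t v' + smul r w' | s t r. True}" using eq by blast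
  next
    fix y assume "y \<in> {g p + smul s u' + smul t v' + smul r w' | s t r. True}"
    then obtain s t r where "y = g p + smul s u' + smul t v' + smul r w'" by blast
    then have "y = g (p + smul s u + smul t v + smul r w)" using eq by simp
    then show "y \<in> g ` H" unfolding H by blast
  qed
  moreover have "\<forall>s t r. smul s u' + smul t v' + smul r w' = 0 \<longrightarrow> s = 0 \<and> t = 0 \<and> r = 0"
  proof (intro allI impI)
    fix s t r assume "smul s u' + smul t v' + smul r w' = 0"
    then have "g (0 + smul s u + smul t v + smul r w) = g 0" 
      using aff_comb[OF assms(2), of 0 s u t v r w] u'_def v'_def w'_def by (simp add: add.assoc)
    then have "smul s u + smul t v + smul r w = 0" using assms(1) by (simp add: inj_eq)
    then show "s = 0 \<and> t = 0 \<and> r = 0" using ind by blast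
  qed
  ultimately show ?thesis unfolding hyperplane_def by blast
qed

lemma aff_inv: assumes "bij g" "affine g" shows "affine (inv g)" "bij (inv g)"
proof -
  let ?h = "inv g"
  have gh: "\<And>y. g (?h y) = y" using assms(1) by (simp add: bij_is_surj surj_f_inv_f)
  have inj: "inj g" using assms(1) bij_is_inj by blast
  show "affine ?h" unfolding affine_def
  proof (intro allI)
    fix x y
    have "g (?h x + ?h y - ?h 0) = g (?h x + ?h y) - g (?h 0) + g 0"
      using aff_diff[OF assms(2)] by blast
    also have "\<dots> = x + y"
      using aff_add[OF assms(2), of "?h x" "?h y"] gh by simp
    also have "\<dots> = g (?h (x + y))" using gh by simp
    finally show "?h (x + y) = ?h x + ?h y - ?h 0" using inj by (simp add: inj_eq)
  qed
  show "bij ?h" using assms(1) by (simp add: bij_imp_bij_inv)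
qed

lemma inv_img: "bij g \<Longrightarrow> inv g ` g ` S = S"
  by (simp add: bij_is_inj image_comp)

lemma cohyp_img: assumes "bij g" "affine g" shows "cohyperplanar (g ` S) \<longleftrightarrow> cohyperplanar S"
proof
  assume "cohyperplanar S"
  then obtain H where "hyperplane H" "S \<subseteq> H" unfolding cohyperplanar_def by blast
  then show "cohyperplanar (g ` S)" unfolding cohyperplanar_def
    using hyp_img[OF bij_is_inj[OF assms(1)] assms(2)] by blast
next
  assume "cohyperplanar (g ` S)"
  then obtain H where "hyperplane H" "g ` S \<subseteq> H" unfolding cohyperplanar_def by blast
  then have "hyperplane (inv g ` H)" "inv g ` g ` S \<subseteq> inv g ` H"
    using hyp_img[OF bij_is_inj[OF aff_inv(2)[OF assms]] aff_inv(1)[OF assms]] by auto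
  then show "cohyperplanar S" unfolding cohyperplanar_def using inv_img[OF assms(1)] by auto
qed

lemma aline_img: assumes "inj g" "affine g" "a_line a P" shows "a_line (g a) (g ` P)"
proof -
  obtain b c where P: "P = {b, c}" "is_line {a, b, c}" "a \<noteq> b" "a \<noteq> c" "b \<noteq> c"
    using assms(3) unfolding a_line_def by blast
  have "is_line (g ` {a,b,c})" by (rule line_img[OF assms(1,2) P(2)])
  moreover have "g a \<noteq> g b" "g a \<noteq> g c" "g b \<noteq> g c" using P assms(1) by (auto dest: injD)
  ultimately show ?thesis unfolding a_line_def P(1) by (intro exI[of _ "g b"] exI[of _ "g c"]) simp
qed

lemma cap_img: assumes "bij g" "affine g" "is_cap C" shows "is_cap (g ` C)"
  unfolding is_cap_def
proof (intro allI impI notI)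
  fix L assume L: "is_line L" "L \<subseteq> g ` C"
  have "is_line (inv g ` L)" using line_img[OF bij_is_inj[OF aff_inv(2)[OF assms(1,2)]] aff_inv(1)[OF assms(1,2)] L(1)] .
  moreover have "inv g ` L \<subseteq> C" using L(2) inv_img[OF assms(1), of C] by blast
  ultimately show False using assms(3) unfolding is_cap_def by blast
qed

lemma demicap_img: assumes "bij g" "affine g" "demicap a D" shows "demicap (g a) (g ` D)"
proof -
  have inj: "inj g" using assms(1) bij_is_inj by blast
  obtain M where M: "card M = 5" "\<forall>P\<in>M. a_line a P" "D = \<Union>M" "card D = 10"
    "\<forall>M'\<subseteq>M. card M' = 4 \<longrightarrow> \<not> cohyperplanar (\<Union>M')" and cap: "is_cap D"
    using assms(3) unfolding demicap_def by blast
  have injI: "inj (image g)" by (rule injI) (simp add: inj_image_eq_iff[OF inj])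
  define N where "N = image g ` M"
  have "card N = 5" unfolding N_def using M(1) injI by (simp add: card_image inj_on_subset)
  moreover have "\<forall>P\<in>N. a_line (g a) P" unfolding N_def using M(2) aline_img[OF inj assms(2)] by blast
  moreover have "g ` D = \<Union>N" unfolding N_def M(3) by auto
  moreover have "card (g ` D) = 10" using M(4) inj by (simp add: card_image inj_on_subset)
  moreover have "\<forall>N'\<subseteq>N. card N' = 4 \<longrightarrow> \<not> cohyperplanar (\<Union>N')"
  proof (intro allI impI)
    fix N' assume N': "N' \<subseteq> N" "card N' = 4"
    define M' where "M' = M \<inter> image g -` N'"
    have "N' = image g ` M'" unfolding M'_def using N'(1) N_def by auto
    then have "card M' = 4" using N'(2) injI by (metis card_image inj_on_subset subset_UNIV)
    moreover have "M' \<subseteq> M" unfolding M'_def by blast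
    ultimately have "\<not> cohyperplanar (\<Union>M')" using M(5) by blast
    moreover have "\<Union>N' = g ` \<Union>M'" using \<open>N' = image g ` M'\<close> by auto
    ultimately show "\<not> cohyperplanar (\<Union>N')" using cohyp_img[OF assms(1,2)] by simp
  qed
  moreover have "is_cap (g ` D)" using cap_img[OF assms(1,2) cap] .
  ultimately show ?thesis unfolding demicap_def by blast
qed



definition lc :: "(nat \<Rightarrow> 3) \<Rightarrow> (nat \<Rightarrow> point) \<Rightarrow> nat \<Rightarrow> point" where
  "lc c us k = (\<Sum>i<k. smul (c i) (us i))"

definition spn :: "(nat \<Rightarrow> point) \<Rightarrow> nat \<Rightarrow> point set" where
  "spn us k = range (\<lambda>c. lc c us k)"

definition indep :: "(nat \<Rightarrow> point) \<Rightarrow> nat \<Rightarrow> bool" where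
  "indep us k \<longleftrightarrow> (\<forall>c. lc c us k = 0 \<longrightarrow> (\<forall>i<k. c i = 0))"

lemma lc_cong: "(\<And>i. i < k \<Longrightarrow> c i = c' i) \<Longrightarrow> (\<And>i. i < k \<Longrightarrow> us i = us' i) \<Longrightarrow> lc c us k = lc c' us' k"
  unfolding lc_def by (rule sum.cong) auto

lemma lc_Suc: "lc c us (Suc k) = lc c us k + smul (c k) (us k)"
  unfolding lc_def by simp

lemma lc1: "lc c us 1 = smul (c 0) (us 0)"
  using lc_Suc[of c us 0] by (simp add: lc_def)
lemma lc2: "lc c us 2 = smul (c 0) (us 0) + smul (c 1) (us 1)"
proof -
  have "lc c us 2 = lc c us (Suc 1)" by (simp add: numeral_2_eq_2)
  also have "\<dots> = lc c us 1 + smul (c 1) (us 1)" by (rule lc_Suc)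
  finally show ?thesis by (simp only: lc1)
qed
lemma lc3: "lc c us 3 = smul (c 0) (us 0) + smul (c 1) (us 1) + smul (c 2) (us 2)"
proof -
  have "lc c us 3 = lc c us (Suc 2)" by simp
  also have "\<dots> = lc c us 2 + smul (c 2) (us 2)" by (rule lc_Suc)
  finally show ?thesis by (simp only: lc2)
qed
lemma lc4: "lc c us 4 = smul (c 0) (us 0) + smul (c 1) (us 1) + smul (c 2) (us 2) + smul (c 3) (us 3)"
proof -
  have "lc c us 4 = lc c us (Suc 3)" by simp
  also have "\<dots> = lc c us 3 + smul (c 3) (us 3)" by (rule lc_Suc)
  finally show ?thesis by (simp only: lc3)
qed

lemma lc_add: "lc c us k + lc c' us k = lc (\<lambda>i. c i + c' i) us k"
  unfolding lc_def by (simp add: smul_add_left sum.distrib)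

lemma lc_diff: "lc c us k - lc c' us k = lc (\<lambda>i. c i - c' i) us k"
  unfolding lc_def by (simp add: smul_diff_left sum_subtractf)

lemma lc_smul: "smul s (lc c us k) = lc (\<lambda>i. s * c i) us k"
proof (induction k)
  case 0 then show ?case by (simp add: lc_def)
next
  case (Suc k) then show ?case by (simp add: lc_Suc smul_add_right smul_smul)
qed

lemma lc_zero: "lc (\<lambda>_. 0) us k = 0"
  unfolding lc_def by simp

lemma lc_unit: "i < k \<Longrightarrow> lc (\<lambda>j. if j = i then 1 else 0) us k = us i"
proof -
  assume "i < k"
  have "lc (\<lambda>j. if j = i then 1 else 0) us k = (\<Sum>j<k. if j = i then us j else 0)"
    unfolding lc_def by (rule sum.cong) auto
  then show ?thesis using \<open>i < k\<close> by simp
qed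

lemma spn_add: "y \<in> spn us k \<Longrightarrow> z \<in> spn us k \<Longrightarrow> y + z \<in> spn us k"
  unfolding spn_def by (auto simp: lc_add)

lemma spn_smul: "y \<in> spn us k \<Longrightarrow> smul s y \<in> spn us k"
  unfolding spn_def by (auto simp: lc_smul)

lemma spn_diff: "y \<in> spn us k \<Longrightarrow> z \<in> spn us k \<Longrightarrow> y - z \<in> spn us k"
  unfolding spn_def by (auto simp: lc_diff)

lemma spn_neg: "y \<in> spn us k \<Longrightarrow> - y \<in> spn us k"
  using spn_smul[of y us k 2] by (simp add: smul_2')

lemma spn_0: "0 \<in> spn us k"
  unfolding spn_def using lc_zero by (metis rangeI)

lemma spn_mem: "i < k \<Longrightarrow> us i \<in> spn us k"
  unfolding spn_def using lc_unit by (metis rangeI)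

lemma spn_Suc: "spn us (Suc k) = {y + smul s (us k) | y s. y \<in> spn us k}"
proof (rule set_eqI, rule iffI)
  fix x assume "x \<in> spn us (Suc k)"
  then obtain c where "x = lc c us (Suc k)" unfolding spn_def by blast
  then show "x \<in> {y + smul s (us k) | y s. y \<in> spn us k}" unfolding spn_def by (auto simp: lc_Suc)
next
  fix x assume "x \<in> {y + smul s (us k) | y s. y \<in> spn us k}"
  then obtain c s where x: "x = lc c us k + smul s (us k)" unfolding spn_def by blast
  have "lc (c(k:=s)) us k = lc c us k" by (rule lc_cong) auto
  then have "x = lc (c(k:=s)) us (Suc k)" using x by (simp add: lc_Suc)
  then show "x \<in> spn us (Suc k)" unfolding spn_def by blast
qed

lemma spn_upd: "spn (us(k:=x)) k = spn us k"
  unfolding spn_def by (rule arg_cong[where f=range], rule ext, rule lc_cong) auto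

lemma spn_img: "spn us k = (\<lambda>c. lc c us k) ` (PiE {..<k} (\<lambda>_. UNIV))"
proof (rule set_eqI, rule iffI)
  fix x assume "x \<in> spn us k"
  then obtain c where x: "x = lc c us k" unfolding spn_def by blast
  have "lc c us k = lc (restrict c {..<k}) us k" by (rule lc_cong) auto
  then show "x \<in> (\<lambda>c. lc c us k) ` (PiE {..<k} (\<lambda>_. UNIV))" using x by force
qed (auto simp: spn_def)

lemma card_Pi3: "card (PiE {..<k} (\<lambda>_. UNIV :: 3 set)) = 3^k"
  by (simp add: card_PiE)

lemma card_spn_le: "card (spn us k) \<le> 3^k"
  unfolding spn_img using card_image_le[of "PiE {..<k} (\<lambda>_. UNIV :: 3 set)"] card_Pi3
  by (metis finite_PiE finite_lessThan finite)

lemma inj_lc: assumes "indep us k" shows "inj_on (\<lambda>c. lc c us k) (PiE {..<k} (\<lambda>_. UNIV))"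
proof (rule inj_onI)
  fix c c' assume c: "c \<in> PiE {..<k} (\<lambda>_. UNIV)" "c' \<in> PiE {..<k} (\<lambda>_. UNIV)" "lc c us k = lc c' us k"
  then have "lc (\<lambda>i. c i - c' i) us k = 0" using lc_diff[of c us k c'] by simp
  then have "\<forall>i<k. c i - c' i = 0" using assms unfolding indep_def by blast
  then have "\<forall>i<k. c i = c' i" by simp
  then show "c = c'" using c(1,2) by (intro PiE_ext) auto
qed

lemma indep_card: "indep us k \<Longrightarrow> card (spn us k) = 3^k"
  unfolding spn_img by (simp add: card_image inj_lc card_Pi3)

lemma card_indep: assumes "card (spn us k) = 3^k" shows "indep us k"
  unfolding indep_def
proof (intro allI impI)
  fix c i assume c: "lc c us k = 0" and i: "i < k"
  have fin: "finite (PiE {..<k} (\<lambda>_. UNIV::3 set))" by (simp add: finite_PiE)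
  have I: "inj_on (\<lambda>c. lc c us k) (PiE {..<k} (\<lambda>_. UNIV))"
    using assms fin unfolding spn_img by (simp add: inj_on_iff_eq_card card_Pi3)
  have E: "lc (restrict c {..<k}) us k = lc (restrict (\<lambda>_. 0) {..<k}) us k"
    using c lc_zero[of us k] by (metis (no_types, lifting) lc_cong restrict_apply' lessThan_iff)
  have M1: "restrict c {..<k} \<in> PiE {..<k} (\<lambda>_. UNIV)" and M2: "restrict (\<lambda>_. 0::3) {..<k} \<in> PiE {..<k} (\<lambda>_. UNIV)"
    by auto
  have "restrict c {..<k} = restrict (\<lambda>_. 0) {..<k}"
    by (rule inj_onD[OF I E M1 M2])
  then show "c i = 0" using i by (metis restrict_apply' lessThan_iff)
qed

lemma card_spn_univ: "card (spn us k) \<le> 81"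
  using card_mono[of UNIV "spn us k"] card_point by simp

lemma indep_le4: assumes "indep us k" shows "k \<le> 4"
proof (rule ccontr)
  assume "\<not> k \<le> 4"
  then have "(3::nat)^5 \<le> 3^k" by (intro power_increasing) auto
  then show False using indep_card[OF assms] card_spn_univ[of us k] by simp
qed

lemma indep_ext: assumes "indep us k" "x \<notin> spn us k" shows "indep (us(k:=x)) (Suc k)"
  unfolding indep_def
proof (intro allI impI)
  fix c i assume c: "lc c (us(k:=x)) (Suc k) = 0" and i: "i < Suc k"
  have eq: "lc c (us(k:=x)) k = lc c us k" by (rule lc_cong) auto
  have A: "lc c us k + smul (c k) x = 0" using c eq by (simp add: lc_Suc)
  have ck: "c k = 0"
  proof (rule ccontr)
    assume "c k \<noteq> 0"
    then have "c k * c k = 1" by (rule sq3)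
    have "smul (c k) x = - lc c us k" using A by (metis add.commute eq_neg_iff_add_eq_0)
    then have "smul (c k) (smul (c k) x) = smul (c k) (- lc c us k)" by simp
    then have "x = smul (c k) (- lc c us k)" using \<open>c k * c k = 1\<close> by (simp add: smul_smul)
    moreover have "smul (c k) (- lc c us k) \<in> spn us k"
      by (intro spn_smul spn_neg) (auto simp: spn_def)
    ultimately show False using assms(2) by simp
  qed
  then have "lc c us k = 0" using A by simp
  then have "\<forall>j<k. c j = 0" using assms(1) unfolding indep_def by blast
  then show "c i = 0" using ck i less_Suc_eq by auto
qed

lemma R: "\<exists>k us. indep us k \<and> spn d j = spn us k"
proof (induction j)
  case 0
  have "indep d 0" unfolding indep_def by simp
  then show ?case by blast
next
  case (Suc j)
  then obtain k us where IH: "indep us k" "spn d j = spn us k" by blast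
  show ?case
  proof (cases "d j \<in> spn us k")
    case True
    have "spn d (Suc j) = spn us k"
    proof
      show "spn d (Suc j) \<subseteq> spn us k" unfolding spn_Suc IH(2)
        using True by (auto intro!: spn_add spn_smul)
      show "spn us k \<subseteq> spn d (Suc j)" unfolding spn_Suc IH(2)
      proof
        fix y assume "y \<in> spn us k"
        then show "y \<in> {y + smul s (d j) | y s. y \<in> spn us k}" by (metis (mono_tags, lifting) add.right_neutral smul_0 mem_Collect_eq)
      qed
    qed
    then show ?thesis using IH(1) by blast
  next
    case False
    have "spn (us(k := d j)) (Suc k) = spn d (Suc j)"
      unfolding spn_Suc spn_upd IH(2) by simp
    then show ?thesis using indep_ext[OF IH(1) False] by metis
  qed
qed

lemma EXT_aux: "\<forall>k us. 3 - k = m \<longrightarrow> k \<le> 3 \<longrightarrow> indep us k \<longrightarrow> (\<exists>us'. indep us' 3 \<and> spn us k \<subseteq> spn us' 3)"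
proof (induction m)
  case 0
  then show ?case by (metis diff_is_0_eq le_antisym order_refl)
next
  case (Suc m)
  show ?case
  proof (intro allI impI)
    fix k us assume k: "3 - k = Suc m" "k \<le> 3" and ind: "indep us k"
    have "k < 3" using k by simp
    then have "(3::nat)^k < 3^3" by (intro power_strict_increasing) auto
    then have "(3::nat)^k < 81" by simp
    then have "spn us k \<noteq> UNIV" using indep_card[OF ind] card_point by auto
    then obtain x where x: "x \<notin> spn us k" by blast
    have i2: "indep (us(k:=x)) (Suc k)" by (rule indep_ext[OF ind x])
    have sub: "spn us k \<subseteq> spn (us(k:=x)) (Suc k)"
      unfolding spn_Suc spn_upd
    proof
      fix y assume "y \<in> spn us k"
      then show "y \<in> {y + smul s ((us(k:=x)) k) | y s. y \<in> spn us k}" by (metis (mono_tags, lifting) add.right_neutral smul_0 mem_Collect_eq)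
    qed
    have "3 - Suc k = m" "Suc k \<le> 3" using k by auto
    then obtain us' where "indep us' 3" "spn (us(k:=x)) (Suc k) \<subseteq> spn us' 3"
      using Suc.IH i2 by blast
    then show "\<exists>us'. indep us' 3 \<and> spn us k \<subseteq> spn us' 3" using sub by blast
  qed
qed

lemma EXT: "indep us k \<Longrightarrow> k \<le> 3 \<Longrightarrow> \<exists>us'. indep us' 3 \<and> spn us k \<subseteq> spn us' 3"
  using EXT_aux by blast

lemma dep_hyp: assumes "\<not> indep d 4"
  shows "\<exists>u v w. (\<forall>s t r. smul s u + smul t v + smul r w = 0 \<longrightarrow> s = 0 \<and> t = 0 \<and> r = 0) \<and>
     (\<forall>i<4. \<exists>s t r. d i = smul s u + smul t v + smul r w)"
proof -
  obtain k us where R1: "indep us k" "spn d 4 = spn us k" using R by blast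
  have "k \<le> 4" using indep_le4[OF R1(1)] .
  moreover have "k \<noteq> 4"
  proof
    assume "k = 4"
    then have "card (spn d 4) = 3^4" using indep_card[OF R1(1)] R1(2) by simp
    then show False using card_indep assms by blast
  qed
  ultimately have "k \<le> 3" by simp
  then obtain us' where U: "indep us' 3" "spn d 4 \<subseteq> spn us' 3" using EXT R1 by metis
  have "\<forall>s t r. smul s (us' 0) + smul t (us' 1) + smul r (us' 2) = 0 \<longrightarrow> s = 0 \<and> t = 0 \<and> r = 0"
  proof (intro allI impI)
    fix s t r assume "smul s (us' 0) + smul t (us' 1) + smul r (us' 2) = 0"
    then have "lc (\<lambda>i. if i = 0 then s else if i = 1 then t else r) us' 3 = 0" by (simp add: lc3)
    then have A: "\<forall>i::nat<3. (\<lambda>i. if i = 0 then s else if i = 1 then t else r) i = 0" using U(1) unfolding indep_def by blast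
    have "(0::nat) < 3" "(1::nat) < 3" "(2::nat) < 3" by simp_all
    then show "s = 0 \<and> t = 0 \<and> r = 0" using A by (metis zero_neq_one numeral_2_eq_2 n_not_Suc_n Suc_1 nat.distinct(1))
  qed
  moreover have "\<forall>i<4. \<exists>s t r. d i = smul s (us' 0) + smul t (us' 1) + smul r (us' 2)"
  proof (intro allI impI)
    fix i :: nat assume "i < 4"
    then have "d i \<in> spn us' 3" using spn_mem[of i 4 d] U(2) by blast
    then obtain c where "d i = lc c us' 3" unfolding spn_def by blast
    then show "\<exists>s t r. d i = smul s (us' 0) + smul t (us' 1) + smul r (us' 2)" unfolding lc3 by blast
  qed
  ultimately show ?thesis by blast
qed

lemma span_nohyp:
  assumes sp: "\<forall>x. \<exists>s1 s2 s3 s4. x = smul s1 b1 + smul s2 b2 + smul s3 b3 + smul s4 b4"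
  shows "\<not> cohyperplanar {b1, -b1, b2, -b2, b3, -b3, b4, -b4}"
proof
  assume "cohyperplanar {b1, -b1, b2, -b2, b3, -b3, b4, -b4}"
  then obtain p u v w where
    H: "{b1, -b1, b2, -b2, b3, -b3, b4, -b4} \<subseteq> {p + smul s u + smul t v + smul r w | s t r. True}"
    unfolding cohyperplanar_def hyperplane_def by blast
  define us where "us = (\<lambda>i::nat. if i = 0 then u else if i = 1 then v else w)"
  have S: "\<And>s t r. smul s u + smul t v + smul r w \<in> spn us 3"
  proof -
    fix s t r
    have "smul s u + smul t v + smul r w = lc (\<lambda>i. if i = 0 then s else if i = 1 then t else r) us 3"
      by (simp add: lc3 us_def)
    then show "smul s u + smul t v + smul r w \<in> spn us 3" unfolding spn_def by blast
  qed
  have key: "\<And>b. b \<in> H' \<Longrightarrow> - b \<in> H' \<Longrightarrow> H' \<subseteq> {p + smul s u + smul t v + smul r w | s t r. True} \<Longrightarrow> b \<in> spn us 3" for H'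
  proof -
    fix b assume "b \<in> H'" "- b \<in> H'" "H' \<subseteq> {p + smul s u + smul t v + smul r w | s t r. True}"
    then obtain s t r s' t' r' where b: "b = p + smul s u + smul t v + smul r w"
      and nb: "- b = p + smul s' u + smul t' v + smul r' w" by blast
    have "b - (- b) = (smul s u + smul t v + smul r w) - (smul s' u + smul t' v + smul r' w)"
      by (subst b, subst nb) (simp add: algebra_simps)
    then have "b - (- b) \<in> spn us 3" by (simp add: spn_diff S)
    then have "- (b + b) \<in> spn us 3" by (simp add: spn_neg)
    then show "b \<in> spn us 3" by (simp only: pt_2neg)
  qed
  have "b1 \<in> spn us 3" "b2 \<in> spn us 3" "b3 \<in> spn us 3" "b4 \<in> spn us 3"
    using key[OF _ _ H] by auto
  then have "\<forall>x. x \<in> spn us 3" using sp by (metis spn_add spn_smul)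
  then have "spn us 3 = UNIV" by blast
  then show False using card_spn_le[of us 3] card_point by simp
qed



lemma aline0: "a_line 0 P \<longleftrightarrow> (\<exists>b. b \<noteq> 0 \<and> P = {b, -b})"
proof
  assume "a_line 0 P"
  then obtain b c where P: "P = {b, c}" "is_line {0, b, c}" "0 \<noteq> b" "0 \<noteq> c" "b \<noteq> c"
    unfolding a_line_def by blast
  have "card {0, b, c} = 3 \<and> sum id {0, b, c} = 0" using P(2) by (simp only: is_line_iff)
  then have "b + c = 0" using P(3-5) by simp
  then have "c = - b" by (metis add.inverse_unique)
  then show "\<exists>b. b \<noteq> 0 \<and> P = {b, -b}" using P(1,3) by (intro exI[of _ b]) simp
next
  assume "\<exists>b. b \<noteq> 0 \<and> P = {b, -b}"
  then obtain b where b: "b \<noteq> 0" "P = {b, -b}" by blast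
  have nb: "b \<noteq> - b" using b(1) pt_neg_self by metis
  have nb2: "0 \<noteq> - b" using b(1) by simp
  have "card {0, b, -b} = 3" using b(1) nb nb2 by simp
  moreover have "sum id {0, b, -b} = 0" using b(1) nb nb2 by simp
  ultimately have "is_line {0, b, -b}" by (simp only: is_line_iff)
  then show "a_line 0 P" unfolding a_line_def using b nb nb2 by blast
qed

lemma aline_gen: assumes "a_line a P" shows "\<exists>d. d \<noteq> 0 \<and> P = {a + d, a - d}"
proof -
  obtain b c where P: "P = {b, c}" "is_line {a, b, c}" "a \<noteq> b" "a \<noteq> c" "b \<noteq> c"
    using assms unfolding a_line_def by blast
  have "card {a, b, c} = 3 \<and> sum id {a, b, c} = 0" using P(2) by (simp only: is_line_iff)
  then have s: "(a + b) + c = 0" using P(3-5) by (simp add: add.assoc)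
  define d where "d = b - a"
  have "b = a + d" unfolding d_def by simp
  moreover have "c = a - d"
  proof -
    have "c = - (a + b)" using s by (metis add.inverse_unique)
    also have "\<dots> = - (a + a) - d" unfolding d_def by (simp add: algebra_simps)
    also have "\<dots> = a - d" by (simp only: pt_2neg)
    finally show ?thesis .
  qed
  moreover have "d \<noteq> 0" using P(3) unfolding d_def by simp
  ultimately show ?thesis using P(1) by blast
qed

definition ev :: "4 \<Rightarrow> point" where "ev k = (\<chi> i. if i = k then 1 else 0)"
definition lnn :: "4 \<Rightarrow> point set" where "lnn k = {ev k, - ev k}"
definition E0 :: "point set" where "E0 = lnn 0 \<union> lnn 1 \<union> lnn 2 \<union> lnn 3"

lemma ev_vals: "ev 0 = vec4 1 0 0 0" "ev 1 = vec4 0 1 0 0" "ev 2 = vec4 0 0 1 0" "ev 3 = vec4 0 0 0 1"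
  by (simp_all add: point_eq ev_def)

lemma E0_vals: "E0 = {vec4 1 0 0 0, vec4 2 0 0 0, vec4 0 1 0 0, vec4 0 2 0 0, vec4 0 0 1 0, vec4 0 0 2 0,
         vec4 0 0 0 1, vec4 0 0 0 2}"
  unfolding E0_def lnn_def ev_vals by auto

lemma E0_UN: "E0 = (\<Union>k. lnn k)"
proof -
  have "\<And>k. lnn k \<subseteq> E0" subgoal for k using ex4[of k] by (auto simp: E0_def) done
  then show ?thesis by (auto simp: E0_def)
qed

lemma ev_comp: "ev k $ i = (if i = k then 1 else 0)"
  by (simp add: ev_def)

lemma lnn_inj: "inj lnn"
proof (rule injI)
  fix j k assume "lnn j = lnn k"
  then have "ev j \<in> lnn k" unfolding lnn_def by auto
  then have "ev j $ j = ev k $ j \<or> ev j $ j = (- ev k) $ j" unfolding lnn_def by auto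
  then show "j = k" by (auto simp: ev_comp split: if_splits)
qed

lemma pair_eq: "x \<in> {b, - b} \<Longrightarrow> {b, - b} = {x, - (x::point)}"
  by auto

lemma hyp_coord: "\<exists>H. hyperplane H \<and> {x. x $ k = 0} \<subseteq> H"
proof -
  have gen: "\<exists>H. hyperplane H \<and> {x. x $ k = 0} \<subseteq> H"
    if ind: "\<forall>s t r. smul s u + smul t v + smul r w = 0 \<longrightarrow> s = 0 \<and> t = 0 \<and> r = 0"
    and sp: "\<And>x. x $ k = 0 \<Longrightarrow> \<exists>s t r. x = 0 + smul s u + smul t v + smul r w" for u v w
  proof -
    let ?H = "{0 + smul s u + smul t v + smul r w | s t r. True}"
    have "hyperplane ?H" unfolding hyperplane_def using ind by blast
    moreover have "{x. x $ k = 0} \<subseteq> ?H" using sp by blast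
    ultimately show ?thesis by blast
  qed
  consider "k = 0" | "k = 1" | "k = 2" | "k = 3" using ex4 by blast
  then show ?thesis
  proof cases
    case 1 show ?thesis
    proof (rule gen[of "vec4 0 1 0 0" "vec4 0 0 1 0" "vec4 0 0 0 1"])
      show "\<forall>s t r. smul s (vec4 0 1 0 0) + smul t (vec4 0 0 1 0) + smul r (vec4 0 0 0 1) = 0 \<longrightarrow> s = 0 \<and> t = 0 \<and> r = 0"
        by (simp add: vec4_zero)
      fix x :: point assume "x $ k = 0"
      then show "\<exists>s t r. x = 0 + smul s (vec4 0 1 0 0) + smul t (vec4 0 0 1 0) + smul r (vec4 0 0 0 1)"
        using 1 by (intro exI[of _ "x$1"] exI[of _ "x$2"] exI[of _ "x$3"]) (simp add: point_eq)
    qed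
  next
    case 2 show ?thesis
    proof (rule gen[of "vec4 1 0 0 0" "vec4 0 0 1 0" "vec4 0 0 0 1"])
      show "\<forall>s t r. smul s (vec4 1 0 0 0) + smul t (vec4 0 0 1 0) + smul r (vec4 0 0 0 1) = 0 \<longrightarrow> s = 0 \<and> t = 0 \<and> r = 0"
        by (simp add: vec4_zero)
      fix x :: point assume "x $ k = 0"
      then show "\<exists>s t r. x = 0 + smul s (vec4 1 0 0 0) + smul t (vec4 0 0 1 0) + smul r (vec4 0 0 0 1)"
        using 2 by (intro exI[of _ "x$0"] exI[of _ "x$2"] exI[of _ "x$3"]) (simp add: point_eq)
    qed
  next
    case 3 show ?thesis
    proof (rule gen[of "vec4 1 0 0 0" "vec4 0 1 0 0" "vec4 0 0 0 1"])
      show "\<forall>s t r. smul s (vec4 1 0 0 0) + smul t (vec4 0 1 0 0) + smul r (vec4 0 0 0 1) = 0 \<longrightarrow> s = 0 \<and> t = 0 \<and> r = 0"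
        by (simp add: vec4_zero)
      fix x :: point assume "x $ k = 0"
      then show "\<exists>s t r. x = 0 + smul s (vec4 1 0 0 0) + smul t (vec4 0 1 0 0) + smul r (vec4 0 0 0 1)"
        using 3 by (intro exI[of _ "x$0"] exI[of _ "x$1"] exI[of _ "x$3"]) (simp add: point_eq)
    qed
  next
    case 4 show ?thesis
    proof (rule gen[of "vec4 1 0 0 0" "vec4 0 1 0 0" "vec4 0 0 1 0"])
      show "\<forall>s t r. smul s (vec4 1 0 0 0) + smul t (vec4 0 1 0 0) + smul r (vec4 0 0 1 0) = 0 \<longrightarrow> s = 0 \<and> t = 0 \<and> r = 0"
        by (simp add: vec4_zero)
      fix x :: point assume "x $ k = 0"
      then show "\<exists>s t r. x = 0 + smul s (vec4 1 0 0 0) + smul t (vec4 0 1 0 0) + smul r (vec4 0 0 1 0)"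
        using 4 by (intro exI[of _ "x$0"] exI[of _ "x$1"] exI[of _ "x$2"]) (simp add: point_eq)
    qed
  qed
qed


lemma card_range_ln: "card (range lnn) = 4"
  using lnn_inj by (simp add: card_image)

lemma std_form: assumes "demicap 0 D" "E0 \<subseteq> D" shows "\<exists>c. (\<forall>i. c$i \<noteq> 0) \<and> D = E0 \<union> {c, -c}"
proof -
  obtain M where M: "card M = 5" "\<forall>P\<in>M. a_line 0 P" "D = \<Union>M" "card D = 10"
    "\<forall>M'\<subseteq>M. card M' = 4 \<longrightarrow> \<not> cohyperplanar (\<Union>M')"
    using assms(1) unfolding demicap_def by blast
  have finM: "finite M" using M(1) card_ge_0_finite by fastforce
  have lnM: "lnn k \<in> M" for k
  proof -
    have "ev k \<in> D" using assms(2) unfolding E0_UN lnn_def by blast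
    then obtain P where P: "P \<in> M" "ev k \<in> P" using M(3) by blast
    then obtain b where "P = {b, -b}" using M(2) aline0 by blast
    then have "P = lnn k" using P(2) pair_eq unfolding lnn_def by metis
    then show ?thesis using P(1) by simp
  qed
  then have sub: "range lnn \<subseteq> M" by blast
  have "\<not> M \<subseteq> range lnn"
  proof
    assume "M \<subseteq> range lnn"
    then have "card M \<le> card (range lnn)" by (intro card_mono) auto
    then show False using M(1) card_range_ln by simp
  qed
  then obtain P5 where P5: "P5 \<in> M" "P5 \<notin> range lnn" by blast
  have Meq: "M = insert P5 (range lnn)"
  proof (rule sym, rule card_subset_eq[OF finM])
    show "insert P5 (range lnn) \<subseteq> M" using sub P5 by blast
    show "card (insert P5 (range lnn)) = card M" using P5(2) M(1) card_range_ln by simp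
  qed
  obtain c where c: "c \<noteq> 0" "P5 = {c, -c}" using M(2) P5(1) aline0 by blast
  have Deq: "D = E0 \<union> {c, -c}" unfolding M(3) Meq E0_UN c(2) by blast
  have "c $ i \<noteq> 0" for i
  proof
    assume ci: "c $ i = 0"
    define M' where "M' = M - {lnn i}"
    have "card M' = 4" unfolding M'_def using lnM M(1) finM by simp
    moreover have "M' \<subseteq> M" unfolding M'_def by blast
    moreover have "\<Union>M' \<subseteq> {x. x $ i = 0}"
    proof
      fix x assume "x \<in> \<Union>M'"
      then obtain Q where Q: "Q \<in> M'" "x \<in> Q" by blast
      then have "Q = P5 \<or> (\<exists>j. j \<noteq> i \<and> Q = lnn j)" unfolding M'_def Meq by auto
      then show "x \<in> {x. x $ i = 0}"
      proof
        assume "Q = P5" then show ?thesis using Q(2) c(2) ci by auto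
      next
        assume "\<exists>j. j \<noteq> i \<and> Q = lnn j"
        then obtain j where "j \<noteq> i" "Q = lnn j" by blast
        then show ?thesis using Q(2) unfolding lnn_def by (auto simp: ev_comp)
      qed
    qed
    then have "cohyperplanar (\<Union>M')" using hyp_coord[of i] unfolding cohyperplanar_def by blast
    ultimately show False using M(5) by blast
  qed
  then show ?thesis using Deq by blast
qed


definition DJ :: "point set" where
  "DJ = {vec4 1 1 1 1, vec4 2 2 2 2, vec4 1 0 0 0, vec4 2 0 0 0, vec4 0 1 0 0, vec4 0 2 0 0, vec4 0 0 1 0, vec4 0 0 2 0,
         vec4 0 0 0 1, vec4 0 0 0 2}"

lemma DJ_noline: "\<forall>x\<in>DJ. \<forall>y\<in>DJ. \<forall>z\<in>DJ. x \<noteq> y \<longrightarrow> y \<noteq> z \<longrightarrow> x \<noteq> z \<longrightarrow> x + y + z \<noteq> 0"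
  unfolding DJ_def vec4_zero by simp

lemma DJ_cap: "is_cap DJ"
  unfolding is_cap_def is_line_def using DJ_noline by blast

lemma nohyp_sub: "\<not> cohyperplanar S \<Longrightarrow> S \<subseteq> T \<Longrightarrow> \<not> cohyperplanar T"
  unfolding cohyperplanar_def by blast

definition q0 :: "point set" where "q0 = {vec4 1 0 0 0, vec4 2 0 0 0}"
definition q1 :: "point set" where "q1 = {vec4 0 1 0 0, vec4 0 2 0 0}"
definition q2 :: "point set" where "q2 = {vec4 0 0 1 0, vec4 0 0 2 0}"
definition q3 :: "point set" where "q3 = {vec4 0 0 0 1, vec4 0 0 0 2}"
definition qJ :: "point set" where "qJ = {vec4 1 1 1 1, vec4 2 2 2 2}"

lemmas qdefs = q0_def q1_def q2_def q3_def qJ_def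

lemma neg3[simp]: "-(1::3) = 2" "-(2::3) = 1" by simp_all

lemma aline_q: "a_line 0 q0" "a_line 0 q1" "a_line 0 q2" "a_line 0 q3" "a_line 0 qJ"
  unfolding aline0 qdefs
  subgoal by (rule exI[of _ "vec4 1 0 0 0"]) (simp add: vec4_zero)
  subgoal by (rule exI[of _ "vec4 0 1 0 0"]) (simp add: vec4_zero)
  subgoal by (rule exI[of _ "vec4 0 0 1 0"]) (simp add: vec4_zero)
  subgoal by (rule exI[of _ "vec4 0 0 0 1"]) (simp add: vec4_zero)
  subgoal by (rule exI[of _ "vec4 1 1 1 1"]) (simp add: vec4_zero)
  done

lemma q_distinct: "distinct [q0, q1, q2, q3, qJ]"
  unfolding qdefs by (simp add: doubleton_eq_iff)

lemma DJ_Union: "DJ = \<Union>{q0, q1, q2, q3, qJ}"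
  unfolding qdefs DJ_def by auto

lemma DJ_card: "card DJ = 10"
  unfolding DJ_def by simp

lemma M_card: "card {q0, q1, q2, q3, qJ} = 5"
  using distinct_card[OF q_distinct] by simp

lemma four_sub: assumes "finite M" "M' \<subseteq> M" "card M' + 1 = card M" shows "\<exists>P\<in>M. M' = M - {P}"
proof -
  have "M' \<noteq> M" using assms(3) by auto
  then obtain P where P: "P \<in> M" "P \<notin> M'" using assms(2) by blast
  have "M' \<subseteq> M - {P}" using assms(2) P by blast
  moreover have "card (M - {P}) = card M'" using assms P by simp
  ultimately have "M' = M - {P}" using assms(1) by (intro card_subset_eq) auto
  then show ?thesis using P by blast
qed


lemma DJ_nohyp: assumes "P \<in> {q0, q1, q2, q3, qJ}" shows "\<not> cohyperplanar (\<Union>({q0, q1, q2, q3, qJ} - {P}))"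
proof -
  have D: "q0 \<noteq> q1" "q0 \<noteq> q2" "q0 \<noteq> q3" "q0 \<noteq> qJ" "q1 \<noteq> q2" "q1 \<noteq> q3" "q1 \<noteq> qJ"
    "q2 \<noteq> q3" "q2 \<noteq> qJ" "q3 \<noteq> qJ" using q_distinct by auto
  have sl: "\<And>Q. Q \<in> {q0, q1, q2, q3, qJ} \<Longrightarrow> Q \<noteq> P \<Longrightarrow> Q \<subseteq> \<Union>({q0, q1, q2, q3, qJ} - {P})" by blast
  consider "P = q0" | "P = q1" | "P = q2" | "P = q3" | "P = qJ" using assms by blast
  then show ?thesis
  proof cases
    case 1
    show ?thesis
    proof (rule nohyp_sub[OF span_nohyp[of "vec4 1 1 1 1" "vec4 0 1 0 0" "vec4 0 0 1 0" "vec4 0 0 0 1"]])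
      show "\<forall>x. \<exists>s1 s2 s3 s4. x = smul s1 (vec4 1 1 1 1) + smul s2 (vec4 0 1 0 0) + smul s3 (vec4 0 0 1 0) + smul s4 (vec4 0 0 0 1)"
      proof
        fix x :: point show "\<exists>s1 s2 s3 s4. x = smul s1 (vec4 1 1 1 1) + smul s2 (vec4 0 1 0 0) + smul s3 (vec4 0 0 1 0) + smul s4 (vec4 0 0 0 1)"
          by (intro exI[of _ "x$0"] exI[of _ "x$1 - x$0"] exI[of _ "x$2 - x$0"] exI[of _ "x$3 - x$0"]) (simp add: point_eq algebra_simps)
      qed
      show "{vec4 1 1 1 1, - (vec4 1 1 1 1), vec4 0 1 0 0, - (vec4 0 1 0 0), vec4 0 0 1 0, - (vec4 0 0 1 0), vec4 0 0 0 1, - (vec4 0 0 0 1)} \<subseteq> \<Union>({q0, q1, q2, q3, qJ} - {P})"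
      proof (rule subset_trans)
        show "q1 \<union> q2 \<union> q3 \<union> qJ \<subseteq> \<Union>({q0, q1, q2, q3, qJ} - {P})"
          by (intro Un_least sl) (simp_all add: D D[THEN not_sym] 1)
      qed (simp add: qdefs)
    qed
  next
    case 2
    show ?thesis
    proof (rule nohyp_sub[OF span_nohyp[of "vec4 1 0 0 0" "vec4 1 1 1 1" "vec4 0 0 1 0" "vec4 0 0 0 1"]])
      show "\<forall>x. \<exists>s1 s2 s3 s4. x = smul s1 (vec4 1 0 0 0) + smul s2 (vec4 1 1 1 1) + smul s3 (vec4 0 0 1 0) + smul s4 (vec4 0 0 0 1)"
      proof
        fix x :: point show "\<exists>s1 s2 s3 s4. x = smul s1 (vec4 1 0 0 0) + smul s2 (vec4 1 1 1 1) + smul s3 (vec4 0 0 1 0) + smul s4 (vec4 0 0 0 1)"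
          by (intro exI[of _ "x$0 - x$1"] exI[of _ "x$1"] exI[of _ "x$2 - x$1"] exI[of _ "x$3 - x$1"]) (simp add: point_eq algebra_simps)
      qed
      show "{vec4 1 0 0 0, - (vec4 1 0 0 0), vec4 1 1 1 1, - (vec4 1 1 1 1), vec4 0 0 1 0, - (vec4 0 0 1 0), vec4 0 0 0 1, - (vec4 0 0 0 1)} \<subseteq> \<Union>({q0, q1, q2, q3, qJ} - {P})"
      proof (rule subset_trans)
        show "q0 \<union> q2 \<union> q3 \<union> qJ \<subseteq> \<Union>({q0, q1, q2, q3, qJ} - {P})"
          by (intro Un_least sl) (simp_all add: D D[THEN not_sym] 2)
      qed (simp add: qdefs)
    qed
  next
    case 3
    show ?thesis
    proof (rule nohyp_sub[OF span_nohyp[of "vec4 1 0 0 0" "vec4 0 1 0 0" "vec4 1 1 1 1" "vec4 0 0 0 1"]])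
      show "\<forall>x. \<exists>s1 s2 s3 s4. x = smul s1 (vec4 1 0 0 0) + smul s2 (vec4 0 1 0 0) + smul s3 (vec4 1 1 1 1) + smul s4 (vec4 0 0 0 1)"
      proof
        fix x :: point show "\<exists>s1 s2 s3 s4. x = smul s1 (vec4 1 0 0 0) + smul s2 (vec4 0 1 0 0) + smul s3 (vec4 1 1 1 1) + smul s4 (vec4 0 0 0 1)"
          by (intro exI[of _ "x$0 - x$2"] exI[of _ "x$1 - x$2"] exI[of _ "x$2"] exI[of _ "x$3 - x$2"]) (simp add: point_eq algebra_simps)
      qed
      show "{vec4 1 0 0 0, - (vec4 1 0 0 0), vec4 0 1 0 0, - (vec4 0 1 0 0), vec4 1 1 1 1, - (vec4 1 1 1 1), vec4 0 0 0 1, - (vec4 0 0 0 1)} \<subseteq> \<Union>({q0, q1, q2, q3, qJ} - {P})"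
      proof (rule subset_trans)
        show "q0 \<union> q1 \<union> q3 \<union> qJ \<subseteq> \<Union>({q0, q1, q2, q3, qJ} - {P})"
          by (intro Un_least sl) (simp_all add: D D[THEN not_sym] 3)
      qed (simp add: qdefs)
    qed
  next
    case 4
    show ?thesis
    proof (rule nohyp_sub[OF span_nohyp[of "vec4 1 0 0 0" "vec4 0 1 0 0" "vec4 0 0 1 0" "vec4 1 1 1 1"]])
      show "\<forall>x. \<exists>s1 s2 s3 s4. x = smul s1 (vec4 1 0 0 0) + smul s2 (vec4 0 1 0 0) + smul s3 (vec4 0 0 1 0) + smul s4 (vec4 1 1 1 1)"
      proof
        fix x :: point show "\<exists>s1 s2 s3 s4. x = smul s1 (vec4 1 0 0 0) + smul s2 (vec4 0 1 0 0) + smul s3 (vec4 0 0 1 0) + smul s4 (vec4 1 1 1 1)"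
          by (intro exI[of _ "x$0 - x$3"] exI[of _ "x$1 - x$3"] exI[of _ "x$2 - x$3"] exI[of _ "x$3"]) (simp add: point_eq algebra_simps)
      qed
      show "{vec4 1 0 0 0, - (vec4 1 0 0 0), vec4 0 1 0 0, - (vec4 0 1 0 0), vec4 0 0 1 0, - (vec4 0 0 1 0), vec4 1 1 1 1, - (vec4 1 1 1 1)} \<subseteq> \<Union>({q0, q1, q2, q3, qJ} - {P})"
      proof (rule subset_trans)
        show "q0 \<union> q1 \<union> q2 \<union> qJ \<subseteq> \<Union>({q0, q1, q2, q3, qJ} - {P})"
          by (intro Un_least sl) (simp_all add: D D[THEN not_sym] 4)
      qed (simp add: qdefs)
    qed
  next
    case 5
    show ?thesis
    proof (rule nohyp_sub[OF span_nohyp[of "vec4 1 0 0 0" "vec4 0 1 0 0" "vec4 0 0 1 0" "vec4 0 0 0 1"]])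
      show "\<forall>x. \<exists>s1 s2 s3 s4. x = smul s1 (vec4 1 0 0 0) + smul s2 (vec4 0 1 0 0) + smul s3 (vec4 0 0 1 0) + smul s4 (vec4 0 0 0 1)"
      proof
        fix x :: point show "\<exists>s1 s2 s3 s4. x = smul s1 (vec4 1 0 0 0) + smul s2 (vec4 0 1 0 0) + smul s3 (vec4 0 0 1 0) + smul s4 (vec4 0 0 0 1)"
          by (intro exI[of _ "x$0"] exI[of _ "x$1"] exI[of _ "x$2"] exI[of _ "x$3"]) (simp add: point_eq algebra_simps)
      qed
      show "{vec4 1 0 0 0, - (vec4 1 0 0 0), vec4 0 1 0 0, - (vec4 0 1 0 0), vec4 0 0 1 0, - (vec4 0 0 1 0), vec4 0 0 0 1, - (vec4 0 0 0 1)} \<subseteq> \<Union>({q0, q1, q2, q3, qJ} - {P})"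
      proof (rule subset_trans)
        show "q0 \<union> q1 \<union> q2 \<union> q3 \<subseteq> \<Union>({q0, q1, q2, q3, qJ} - {P})"
          by (intro Un_least sl) (simp_all add: D D[THEN not_sym] 5)
      qed (simp add: qdefs)
    qed
  qed
qed


lemma demicap_DJ: "demicap 0 DJ"
  unfolding demicap_def
proof (intro conjI exI[of _ "{q0, q1, q2, q3, qJ}"])
  show "is_cap DJ" by (rule DJ_cap)
  show "card {q0, q1, q2, q3, qJ} = 5" by (rule M_card)
  show "\<forall>P\<in>{q0, q1, q2, q3, qJ}. a_line 0 P" using aline_q by blast
  show "DJ = \<Union>{q0, q1, q2, q3, qJ}" by (rule DJ_Union)
  show "card DJ = 10" by (rule DJ_card)
  show "\<forall>M'\<subseteq>{q0, q1, q2, q3, qJ}. card M' = 4 \<longrightarrow> \<not> cohyperplanar (\<Union>M')"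
  proof (intro allI impI)
    fix M' assume a: "M' \<subseteq> {q0, q1, q2, q3, qJ}" "card M' = 4"
    have f: "finite {q0, q1, q2, q3, qJ}" by simp
    have c: "card M' + 1 = card {q0, q1, q2, q3, qJ}" using M_card a(2) by simp
    obtain P where "P \<in> {q0, q1, q2, q3, qJ}" "M' = {q0, q1, q2, q3, qJ} - {P}"
      using four_sub[OF f a(1) c] by blast
    then show "\<not> cohyperplanar (\<Union>M')" using DJ_nohyp by blast
  qed
qed

definition Jv :: point where "Jv = vec4 1 1 1 1"

lemma DJ_E0: "E0 \<union> {Jv, - Jv} = DJ"
  unfolding E0_vals DJ_def Jv_def by simp

definition diag :: "point \<Rightarrow> point \<Rightarrow> point" where
  "diag c x = (\<chi> i. c $ i * x $ i)"

lemma diag_comp: "diag c x $ i = c $ i * x $ i"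
  by (simp add: diag_def)

lemma diag_affine: "affine (diag c)"
  unfolding affine_def by (simp add: vec_eq_iff diag_comp algebra_simps)

lemma diag_inj: assumes "\<forall>i. c $ i \<noteq> 0" shows "inj (diag c)"
proof (rule injI)
  fix x y assume "diag c x = diag c y"
  then have "\<forall>i. c $ i * x $ i = c $ i * y $ i" by (simp add: vec_eq_iff diag_comp)
  then have "\<forall>i. c $ i * (c $ i * x $ i) = c $ i * (c $ i * y $ i)" by simp
  then show "x = y" using assms sq3 by (simp add: vec_eq_iff mult.assoc[symmetric])
qed

lemma diag_bij: assumes "\<forall>i. c $ i \<noteq> 0" shows "bij (diag c)"
  using diag_inj[OF assms] finite_UNIV_inj_surj[of "diag c"] by (simp add: bij_def)

lemma diag_neg: "diag c (- x) = - diag c x"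
  by (simp add: vec_eq_iff diag_comp)

lemma diag_ev: assumes "c $ k \<noteq> 0" shows "diag c ` lnn k = lnn k"
proof -
  have "c $ k = 1 \<or> c $ k = 2" using ex3[of "c$k"] assms by auto
  then have "diag c (ev k) = ev k \<or> diag c (ev k) = - ev k"
    by (auto simp: vec_eq_iff diag_comp ev_comp)
  then show ?thesis unfolding lnn_def using diag_neg by auto
qed

lemma diag_J: "diag c Jv = c"
  by (simp add: vec_eq_iff diag_comp Jv_def vec4_def)

lemma diag_0: "diag c 0 = 0"
  by (simp add: vec_eq_iff diag_comp)

lemma std_good: assumes "\<forall>i. c $ i \<noteq> 0" shows "demicap 0 (E0 \<union> {c, -c})"
proof -
  have "diag c ` (E0 \<union> {Jv, -Jv}) = E0 \<union> {c, -c}"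
  proof -
    have "diag c ` E0 = E0" unfolding E0_UN image_UN using diag_ev assms by simp
    moreover have "diag c ` {Jv, -Jv} = {c, -c}" using diag_J diag_neg by simp
    ultimately show ?thesis by (simp add: image_Un diag_J diag_neg)
  qed
  then show ?thesis using demicap_img[OF diag_bij[OF assms] diag_affine demicap_DJ[folded DJ_E0]]
    by (simp add: diag_0)
qed


definition S0 :: "point set set" where "S0 = {D. demicap 0 D \<and> E0 \<subseteq> D}"
definition G8 :: "point set" where "G8 = {c. c $ 0 = 1 \<and> c $ 1 \<noteq> 0 \<and> c $ 2 \<noteq> 0 \<and> c $ 3 \<noteq> 0}"

lemma G8_nz: "c \<in> G8 \<Longrightarrow> \<forall>i. c $ i \<noteq> 0"
  unfolding G8_def by (simp add: all4)

lemma S0_eq: "S0 = (\<lambda>c. E0 \<union> {c, -c}) ` G8"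
proof (rule set_eqI, rule iffI)
  fix D assume "D \<in> S0"
  then obtain c where c: "\<forall>i. c $ i \<noteq> 0" "D = E0 \<union> {c, -c}" using std_form unfolding S0_def by blast
  have "c $ 0 = 1 \<or> c $ 0 = 2" using ex3[of "c $ 0"] c(1) by auto
  then show "D \<in> (\<lambda>c. E0 \<union> {c, -c}) ` G8"
  proof
    assume "c $ 0 = 1" then have "c \<in> G8" using c(1) unfolding G8_def by simp
    then show ?thesis using c(2) by blast
  next
    assume "c $ 0 = 2" then have "- c \<in> G8" using c(1) unfolding G8_def by simp
    moreover have "D = E0 \<union> {- c, - (- c)}" using c(2) by auto
    ultimately show ?thesis by blast
  qed
next
  fix D assume "D \<in> (\<lambda>c. E0 \<union> {c, -c}) ` G8"
  then obtain c where "c \<in> G8" "D = E0 \<union> {c, -c}" by blast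
  then show "D \<in> S0" unfolding S0_def using std_good G8_nz by blast
qed

lemma G8_notE0: "c \<in> G8 \<Longrightarrow> c \<notin> E0"
  unfolding G8_def E0_vals by auto

lemma inj_G8: "inj_on (\<lambda>c. E0 \<union> {c, -c}) G8"
proof (rule inj_onI)
  fix c c' assume c: "c \<in> G8" "c' \<in> G8" "E0 \<union> {c, -c} = E0 \<union> {c', -c'}"
  then have "c \<in> E0 \<union> {c', -c'}" by blast
  then have "c = c' \<or> c = - c'" using G8_notE0[OF c(1)] by blast
  moreover have "c \<noteq> - c'"
  proof
    assume "c = - c'"
    then have "c $ 0 = - (c' $ 0)" by simp
    then show False using c(1,2) unfolding G8_def by simp
  qed
  ultimately show "c = c'" by blast
qed

lemma card_G8: "card G8 = 8"
proof -
  have "G8 = (\<lambda>(s,t,r). vec4 1 s t r) ` ({1,2} \<times> {1,2} \<times> {1,2})"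
  proof (rule set_eqI, rule iffI)
    fix x assume x: "x \<in> G8"
    have "x = vec4 1 (x$1) (x$2) (x$3)" using x unfolding G8_def by (simp add: point_eq)
    moreover have "x$1 \<in> {1,2}" "x$2 \<in> {1,2}" "x$3 \<in> {1,2}" using x ex3 unfolding G8_def by auto
    ultimately show "x \<in> (\<lambda>(s,t,r). vec4 1 s t r) ` ({1,2} \<times> {1,2} \<times> {1,2})" by force
  qed (auto simp: G8_def)
  moreover have "inj_on (\<lambda>(s,t,r). vec4 1 s t r) ({1,2} \<times> {1,2} \<times> ({1,2}::3 set))"
    by (rule inj_onI) clarsimp
  ultimately have "card G8 = card ({1,2::3} \<times> {1,2::3} \<times> ({1,2}::3 set))" by (metis card_image)
  then show ?thesis by (simp add: card_cartesian_product)
qed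

lemma card_S0: "card S0 = 8"
  unfolding S0_eq using card_image[OF inj_G8] card_G8 by simp


lemma pair_in_hyp: "d = smul s u + smul t v + smul r w \<Longrightarrow>
   {a + d, a - d} \<subseteq> {a + smul s u + smul t v + smul r w | s t r. True}"
proof -
  assume d: "d = smul s u + smul t v + smul r w"
  have "a + d = a + smul s u + smul t v + smul r w" using d by (simp add: add.assoc)
  moreover have "a - d = a + smul (-s) u + smul (-t) v + smul (-r) w"
    using d by (simp add: smul_neg_left algebra_simps)
  ultimately show ?thesis by blast
qed

theorem corollary3p7:
  fixes a :: point and L1 L2 L3 L4 :: "point set"
  assumes "a_line a L1" "a_line a L2" "a_line a L3" "a_line a L4"
    and "distinct [L1, L2, L3, L4]"
    and "\<not> cohyperplanar (L1 \<union> L2 \<union> L3 \<union> L4)"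
  shows "card {D. demicap a D \<and> L1 \<union> L2 \<union> L3 \<union> L4 \<subseteq> D} = 8"
proof -
  obtain d1 where d1: "L1 = {a + d1, a - d1}" using aline_gen[OF assms(1)] by blast
  obtain d2 where d2: "L2 = {a + d2, a - d2}" using aline_gen[OF assms(2)] by blast
  obtain d3 where d3: "L3 = {a + d3, a - d3}" using aline_gen[OF assms(3)] by blast
  obtain d4 where d4: "L4 = {a + d4, a - d4}" using aline_gen[OF assms(4)] by blast
  define dd where "dd = (\<lambda>i::nat. if i = 0 then d1 else if i = 1 then d2 else if i = 2 then d3 else d4)"
  have dd: "dd 0 = d1" "dd 1 = d2" "dd 2 = d3" "dd 3 = d4" unfolding dd_def by simp_all
  have ind: "indep dd 4"
  proof (rule ccontr)
    assume "\<not> indep dd 4"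
    then obtain u v w where uvw: "\<forall>s t r. smul s u + smul t v + smul r w = 0 \<longrightarrow> s = 0 \<and> t = 0 \<and> r = 0"
      and sp: "\<forall>i<4. \<exists>s t r. dd i = smul s u + smul t v + smul r w" using dep_hyp by blast
    let ?H = "{a + smul s u + smul t v + smul r w | s t r. True}"
    have hH: "hyperplane ?H" unfolding hyperplane_def using uvw by blast
    have "\<And>i. i < 4 \<Longrightarrow> {a + dd i, a - dd i} \<subseteq> ?H"
    proof -
      fix i :: nat assume "i < 4"
      then obtain s t r where "dd i = smul s u + smul t v + smul r w" using sp by blast
      then show "{a + dd i, a - dd i} \<subseteq> ?H" by (rule pair_in_hyp)
    qed
    then have "{a + dd 0, a - dd 0} \<subseteq> ?H" "{a + dd 1, a - dd 1} \<subseteq> ?H"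
       "{a + dd 2, a - dd 2} \<subseteq> ?H" "{a + dd 3, a - dd 3} \<subseteq> ?H" by simp_all
    then have "L1 \<union> L2 \<union> L3 \<union> L4 \<subseteq> ?H" unfolding d1 d2 d3 d4 dd by blast
    then show False using assms(6) hH unfolding cohyperplanar_def by blast
  qed
  define g where "g x = a + smul (x$0) d1 + smul (x$1) d2 + smul (x$2) d3 + smul (x$3) d4" for x :: point
  have g0: "g 0 = a" unfolding g_def by simp
  have gaff: "affine g" unfolding affine_def g_def by (simp add: smul_add_left algebra_simps)
  have ginj: "inj g"
  proof (rule injI)
    fix x y assume "g x = g y"
    then have "g x - g y = 0" by simp
    then have "smul (x$0 - y$0) d1 + smul (x$1 - y$1) d2 + smul (x$2 - y$2) d3 + smul (x$3 - y$3) d4 = 0"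
      unfolding g_def by (simp add: smul_diff_left algebra_simps)
    then have "lc (\<lambda>i. if i = 0 then x$0 - y$0 else if i = 1 then x$1 - y$1 else if i = 2 then x$2 - y$2 else x$3 - y$3) dd 4 = 0"
      by (simp add: lc4 dd_def)
    then have A: "\<forall>i::nat<4. (\<lambda>i. if i = 0 then x$0 - y$0 else if i = 1 then x$1 - y$1 else if i = 2 then x$2 - y$2 else x$3 - y$3) i = 0"
      using ind unfolding indep_def by blast
    have "x$0 - y$0 = 0" using A[rule_format, of 0] by simp
    moreover have "x$1 - y$1 = 0" using A[rule_format, of 1] by simp
    moreover have "x$2 - y$2 = 0" using A[rule_format, of 2] by simp
    moreover have "x$3 - y$3 = 0" using A[rule_format, of 3] by simp
    ultimately show "x = y" by (simp add: point_eq)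
  qed
  have gbij: "bij g" using ginj finite_UNIV_inj_surj[of g] by (simp add: bij_def)
  have gE: "g ` E0 = L1 \<union> L2 \<union> L3 \<union> L4"
    unfolding E0_def lnn_def ev_vals d1 d2 d3 d4 g_def by (simp add: smul_2' image_Un)
  let ?E = "L1 \<union> L2 \<union> L3 \<union> L4"
  have eq: "{D. demicap a D \<and> ?E \<subseteq> D} = image g ` S0"
  proof (rule set_eqI, rule iffI)
    fix D assume D: "D \<in> {D. demicap a D \<and> ?E \<subseteq> D}"
    let ?h = "inv g"
    have "demicap (?h a) (?h ` D)" using demicap_img[OF aff_inv(2)[OF gbij gaff] aff_inv(1)[OF gbij gaff]] D by blast
    moreover have "?h a = 0" using g0 ginj by (metis inv_f_f)
    moreover have "E0 \<subseteq> ?h ` D" using D gE inv_img[OF gbij, of E0] by blast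
    ultimately have "?h ` D \<in> S0" unfolding S0_def by simp
    moreover have "g ` ?h ` D = D" using gbij by (simp add: image_comp bij_is_surj surj_f_inv_f image_ident
        comp_def)
    ultimately show "D \<in> image g ` S0" by (metis image_eqI)
  next
    fix D assume "D \<in> image g ` S0"
    then obtain D0 where D0: "D0 \<in> S0" "D = g ` D0" by blast
    then have "demicap (g 0) (g ` D0)" using demicap_img[OF gbij gaff] unfolding S0_def by blast
    moreover have "?E \<subseteq> g ` D0" using D0 gE unfolding S0_def by blast
    ultimately show "D \<in> {D. demicap a D \<and> ?E \<subseteq> D}" using D0(2) g0 by simp
  qed
  have "inj_on (image g) S0" by (rule inj_onI) (simp add: inj_image_eq_iff[OF ginj])
  then show ?thesis unfolding eq using card_S0 by (simp add: card_image)
qed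


end
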